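(* Let $1\le k<n$. An $(n,n-k,n)_q$ code of size $n/k$ exists if and only if $k$ divides $n$ and $q\ge n/k$. In particular, when $k\mid n$, $q''_0(1,k,n)=n/k$.
   Context: $\mathbb{Z}_q=\{0,\dots,q-1\}$ (an alphabet); $\mathrm{wt}$ = number of nonzero coordinates; $d$ = Hamming distance; $J_q(n,w)$ = weight-$w$ words of $\mathbb{Z}_q^n$. An $(n,w,d)_q$ code of size $M$ is a subset $C\subseteq J_q(n,w)$ with $|C|=M$ and pairwise distances at least $d$. A Steiner system $S(t,k,n)$ is a pair $(N,B)$, $|N|=n$, $B$ a set of $k$-subsets (blocks) with every $t$-subset in exactly one block (an $S(1,k,n)$ exists iff $k\mid n$). For $t,k,n$ such that an $S(t,k,n)$ exists, $q''_0(t,k,n)$ is the smallest $q$ for which an $(n,n-k,n-t+1)_q$ code of size $\binom{n}{t}/\binom{k}{t}$ exists. *)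

theory Defs
  imports Complex_Main
begin

definition wt :: "nat list \<Rightarrow> nat" where
  "wt x = card {i. i < length x \<and> x ! i \<noteq> 0}"

definition hdist :: "nat list \<Rightarrow> nat list \<Rightarrow> nat" where
  "hdist x y = card {i. i < length x \<and> x ! i \<noteq> y ! i}"

definition J :: "nat \<Rightarrow> nat \<Rightarrow> nat \<Rightarrow> nat list set" where
  "J q n w = {x. length x = n \<and> set x \<subseteq> {0..<q} \<and> wt x = w}"

definition is_code :: "nat \<Rightarrow> nat \<Rightarrow> nat \<Rightarrow> nat \<Rightarrow> nat list set \<Rightarrow> bool" where
  "is_code q n w d C \<longleftrightarrow> C \<subseteq> J q n w \<and>
     (\<forall>x\<in>C. \<forall>y\<in>C. x \<noteq> y \<longrightarrow> d \<le> hdist x y)"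

text \<open>q''_0(t,k,n): least q admitting an (n,n-k,n-t+1)_q code of size C(n,t)/C(k,t)
  (meaningful when an S(t,k,n) exists, so that the division is exact).\<close>
definition q0'' :: "nat \<Rightarrow> nat \<Rightarrow> nat \<Rightarrow> nat" where
  "q0'' t k n = (LEAST q. \<exists>C. is_code q n (n - k) (n - t + 1) C \<and>
                    card C = (n choose t) div (k choose t))"

end

theory Submission
  imports Defs
begin

lemma code_card_le:
  assumes "is_code q n w n C" "0 < n"
  shows "card C \<le> q"
proof -
  have inj: "inj_on (\<lambda>x. x ! 0) C"
  proof (rule inj_onI, rule ccontr)
    fix x y assume xy: "x \<in> C" "y \<in> C" "x ! 0 = y ! 0" "x \<noteq> y"
    have lx: "length x = n" using assms(1) xy(1) by (auto simp: is_code_def J_def)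
    have "n \<le> hdist x y" using assms(1) xy by (auto simp: is_code_def)
    moreover have "{i. i < length x \<and> x ! i \<noteq> y ! i} \<subseteq> {1..<n}"
      using xy(3) lx by (auto simp: Suc_le_eq) (metis gr0I)
    hence "hdist x y \<le> n - 1" unfolding hdist_def
      by (metis card_atLeastLessThan card_mono finite_atLeastLessThan)
    ultimately show False using assms(2) by linarith
  qed
  have "(\<lambda>x. x ! 0) ` C \<subseteq> {0..<q}"
    using assms by (force simp: is_code_def J_def)
  from card_inj_on_le[OF inj this] show ?thesis by simp
qed

definition wrd :: "nat \<Rightarrow> nat \<Rightarrow> nat \<Rightarrow> nat \<Rightarrow> nat list" where
  "wrd k m n j = map (\<lambda>i. (i div k + m - j) mod m) [0..<n]"

lemma construct:
  assumes "1 \<le> k" "n = m * k" "m \<le> q" "2 \<le> m"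
  shows "is_code q n (n - k) n (wrd k m n ` {..<m}) \<and> card (wrd k m n ` {..<m}) = m"
proof -
  have diff: "(b + m - j) mod m \<noteq> (b + m - j') mod m" if "b < m" "j < m" "j' < m" "j \<noteq> j'" for b j j'
  proof
    assume "(b + m - j) mod m = (b + m - j') mod m"
    hence "int (b + m - j) mod int m = int (b + m - j') mod int m"
      by (metis of_nat_mod)
    hence "(int b + int m - int j) mod int m = (int b + int m - int j') mod int m"
      using that by (simp add: of_nat_diff)
    hence "(int b - int j) mod int m = (int b - int j') mod int m"
      by (metis add.commute add_diff_eq mod_add_self2)
    hence "(int b - int j - (int b - int j')) mod int m = 0"
      by (simp add: mod_eq_dvd_iff)
    hence "(int j' - int j) mod int m = 0" by simp
    hence d: "int m dvd int j' - int j" by (simp add: dvd_eq_mod_eq_0)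
    show False
    proof (cases "j < j'")
      case True
      hence e: "int j' - int j = int (j' - j)" by linarith
      from d have "m dvd j' - j" unfolding e by (simp only: of_nat_dvd_iff)
      hence "m \<le> j' - j" using True by (intro dvd_imp_le) auto
      with that show False by linarith
    next
      case False
      hence e: "int j' - int j = - int (j - j')" using that by linarith
      from d have "m dvd j - j'" unfolding e by (simp only: dvd_minus_iff of_nat_dvd_iff)
      hence "m \<le> j - j'" using False that(4) by (intro dvd_imp_le) auto
      with that show False by linarith
    qed
  qed
  have zero: "(b + m - j) mod m = 0 \<longleftrightarrow> b = j" if "b < m" "j < m" for b j
  proof
    assume h: "(b + m - j) mod m = 0"
    show "b = j"
    proof (rule ccontr)
      assume "b \<noteq> j"
      from diff[OF that(1) that(2) that(1) this[symmetric]] h show False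
        using that by simp
    qed
  qed simp
  have bk: "i div k < m" if "i < n" for i
    using that assms by (simp add: less_mult_imp_div_less)
  have len: "length (wrd k m n j) = n" for j by (simp add: wrd_def)
  have nth: "i < n \<Longrightarrow> wrd k m n j ! i = (i div k + m - j) mod m" for i j
    by (simp add: wrd_def)
  have zs: "{i. i < n \<and> i div k = j} = {j*k..<j*k+k}" if "j < m" for j
  proof -
    have "i < n" if "j * k \<le> i" "i < j*k+k" for i
    proof -
      have "j*k + k \<le> m * k" using \<open>j<m\<close>
        by (metis Suc_leI add.commute mult_Suc mult_le_mono1)
      thus ?thesis using that assms(2) by linarith
    qed
    moreover have "i div k = j \<longleftrightarrow> j * k \<le> i \<and> i < j*k+k" for i
    proof
      assume "i div k = j"
      hence "i = j * k + i mod k" by (metis div_mult_mod_eq)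
      moreover have "i mod k < k" using assms(1) by simp
      ultimately show "j * k \<le> i \<and> i < j*k+k" by linarith
    next
      assume "j * k \<le> i \<and> i < j*k+k"
      thus "i div k = j" using assms(1) by (simp add: div_nat_eqI mult.commute)
    qed
    ultimately show ?thesis by auto
  qed
  have wt: "wt (wrd k m n j) = n - k" if "j < m" for j
  proof -
    have "{i. i < length (wrd k m n j) \<and> wrd k m n j ! i \<noteq> 0}
        = {..<n} - {i. i < n \<and> i div k = j}"
      using zero bk that by (auto simp: len nth) (metis bk gr0I zero)
    moreover have "card ({..<n} - {i. i < n \<and> i div k = j}) = n - k"
    proof -
      have "{i. i < n \<and> i div k = j} \<subseteq> {..<n}" by auto
      moreover have "card {i. i < n \<and> i div k = j} = k" by (simp add: zs[OF that])
      ultimately show ?thesis by (subst card_Diff_subset) auto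
    qed
    ultimately show ?thesis by (simp add: wt_def)
  qed
  have hd: "hdist (wrd k m n j) (wrd k m n j') = n" if "j < m" "j' < m" "j \<noteq> j'" for j j'
  proof -
    have "{i. i < length (wrd k m n j) \<and> wrd k m n j ! i \<noteq> wrd k m n j' ! i} = {..<n}"
      using diff bk that by (auto simp: len nth)
    thus ?thesis by (simp add: hdist_def)
  qed
  have inj: "inj_on (wrd k m n) {..<m}"
  proof (rule inj_onI, rule ccontr)
    fix j j' assume "j \<in> {..<m}" "j' \<in> {..<m}" "wrd k m n j = wrd k m n j'" "j \<noteq> j'"
    with hd[of j j'] assms show False by (simp add: hdist_def)
  qed
  have sub: "set (wrd k m n j) \<subseteq> {0..<q}" for j
  proof
    fix x assume "x \<in> set (wrd k m n j)"
    then obtain i where "x = (i div k + m - j) mod m" by (auto simp: wrd_def)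
    moreover have "(i div k + m - j) mod m < m" using assms(4) by simp
    ultimately show "x \<in> {0..<q}" using assms(3) by simp
  qed
  show ?thesis
    unfolding is_code_def J_def
    using wt hd sub len card_image[OF inj] by fastforce
qed


theorem mainTheorem15:
  fixes k n q :: nat
  assumes "1 \<le> k" and "k < n"
  shows "((\<exists>C. is_code q n (n - k) n C \<and> real (card C) = real n / real k)
            \<longleftrightarrow> (k dvd n \<and> real n / real k \<le> real q))
         \<and> (k dvd n \<longrightarrow> q0'' 1 k n = n div k)"
proof -
  have ex: "\<exists>C. is_code q' n (n - k) n C \<and> card C = n div k" if "k dvd n" "n div k \<le> q'" for q'
  proof -
    obtain m where m: "n = m * k" using \<open>k dvd n\<close> by (metis dvd_def mult.commute)
    have md: "n div k = m" using m assms by simp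
    have "2 \<le> m"
    proof (rule ccontr)
      assume "\<not> 2 \<le> m" hence "m = 0 \<or> m = 1" by auto
      thus False using m assms by auto
    qed
    from construct[OF assms(1) m _ this, of q'] that md show ?thesis by auto
  qed
  have eqv: "real (card C) = real n / real k \<longleftrightarrow> k dvd n \<and> card C = n div k" for C
  proof
    assume h: "real (card C) = real n / real k"
    hence "real (card C * k) = real n" using assms by (simp add: field_simps)
    hence "card C * k = n" by linarith
    thus "k dvd n \<and> card C = n div k" using assms by auto
  next
    assume "k dvd n \<and> card C = n div k"
    thus "real (card C) = real n / real k" using assms by (simp add: real_of_nat_div)
  qed
  have ndk: "real n / real k = real (n div k)" if "k dvd n" using that by (simp add: real_of_nat_div)
  have p1: "(\<exists>C. is_code q n (n - k) n C \<and> real (card C) = real n / real k)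
            \<longleftrightarrow> (k dvd n \<and> real n / real k \<le> real q)"
  proof
    assume "\<exists>C. is_code q n (n - k) n C \<and> real (card C) = real n / real k"
    then obtain C where C: "is_code q n (n - k) n C" "k dvd n" "card C = n div k" using eqv by blast
    from code_card_le[OF C(1)] assms C show "k dvd n \<and> real n / real k \<le> real q"
      by (simp add: ndk)
  next
    assume "k dvd n \<and> real n / real k \<le> real q"
    hence "k dvd n" "n div k \<le> q" using ndk by auto
    with ex eqv show "\<exists>C. is_code q n (n - k) n C \<and> real (card C) = real n / real k" by blast
  qed
  have p2: "q0'' 1 k n = n div k" if "k dvd n"
    unfolding q0''_def
  proof (rule Least_equality)
    show "\<exists>C. is_code (n div k) n (n - k) (n - 1 + 1) C \<and> card C = (n choose 1) div (k choose 1)"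
      using ex[OF that] assms by simp
  next
    fix y assume "\<exists>C. is_code y n (n - k) (n - 1 + 1) C \<and> card C = (n choose 1) div (k choose 1)"
    then obtain C where "is_code y n (n - k) n C" "card C = n div k" using assms by auto
    with code_card_le assms show "n div k \<le> y" by fastforce
  qed
  from p1 p2 show ?thesis by blast
qed

end
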